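(* For every set of formulas $\Gamma$ and formula $\alpha$: $\circ^{*}(Var(\Gamma\cup\{\alpha\})),\Gamma\vdash_{LFI3}\alpha$ if and only if $\Gamma\vdash_{CPL}\alpha$, where $\circ^{*}(X)=\{\circ^{*}p: p\in X\}$.
   Context: Formulas are built from a countable set of propositional variables using unary $\neg,\circ$ and binary $\land,\lor,\to$. Define $\circ^*\alpha:=(\alpha\land\circ\alpha\land\circ\circ\alpha)\lor(\neg\alpha\land\circ\alpha\land\circ\circ\alpha)$. $Var(\Delta)$ is the set of propositional variables occurring in $\Delta$. On $\{0,1\}$ use Boolean $\land,\lor,\to,\sim$. Let $\mathbb{B}=\{x\in\{0,1\}^3: x_1\lor x_2=1,\ x_3\lor\sim(x_1\land x_2)=1\}$, with $T=(1,0,0)$ and $F=(0,1,0)$. The LFI3 algebra on $\mathbb{B}$: $a\dot\land b=(a_1\land b_1,\ a_2\lor b_2,\ (\sim a_2\land b_3)\lor(a_3\land\sim b_2)\lor(a_3\land b_3))$; $a\dot\lor b=(a_1\lor b_1,\ a_2\land b_2,\ (\sim a_1\land b_3)\lor(a_3\land\sim b_1)\lor(a_3\land b_3))$; $a\dot\to b=(a_1\to b_1,\ b_2\land(\sim a_2\lor a_3),\ (\sim a_2\land b_3)\lor(\sim a_2\land a_3\land\sim b_1)\lor(a_3\land b_3)\lor(\sim a_1\land a_3\land\sim b_1))$; $\dot\neg a=(a_2,a_1,a_3)$; $\dot\circ a=(\sim(a_1\land a_2),a_3,a_3\land\sim(a_1\land a_2))$; designated set $\{x:x_1=1\}$. CPL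 is the matrix logic of the two-element subalgebra $\{T,F\}$ with designated set $\{T\}$ (usual two-valued tables, $\circ\alpha$ always true). For matrix logics, $\Gamma\vdash\alpha$ iff every homomorphic valuation designating all of $\Gamma$ designates $\alpha$. *)

theory Defs
  imports Main
begin

datatype fm = Atom nat | Neg fm | Circ fm | And fm fm | Or fm fm | Imp fm fm

primrec vars :: "fm \<Rightarrow> nat set" where
  "vars (Atom p) = {p}"
| "vars (Neg a) = vars a"
| "vars (Circ a) = vars a"
| "vars (And a b) = vars a \<union> vars b"
| "vars (Or a b) = vars a \<union> vars b"
| "vars (Imp a b) = vars a \<union> vars b"

definition Vars :: "fm set \<Rightarrow> nat set" where
  "Vars \<Delta> = (\<Union>a\<in>\<Delta>. vars a)"

definition circstar :: "fm \<Rightarrow> fm" where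
  "circstar a = Or (And (And a (Circ a)) (Circ (Circ a)))
                   (And (And (Neg a) (Circ a)) (Circ (Circ a)))"

type_synonym tv = "bool \<times> bool \<times> bool"

definition BB :: "tv set" where
  "BB = {(x1, x2, x3). (x1 \<or> x2) \<and> (x3 \<or> \<not> (x1 \<and> x2))}"

definition TT :: tv where "TT = (True, False, False)"
definition FF :: tv where "FF = (False, True, False)"

fun tand :: "tv \<Rightarrow> tv \<Rightarrow> tv" where
  "tand (a1, a2, a3) (b1, b2, b3) =
     (a1 \<and> b1, a2 \<or> b2, (\<not> a2 \<and> b3) \<or> (a3 \<and> \<not> b2) \<or> (a3 \<and> b3))"

fun tor :: "tv \<Rightarrow> tv \<Rightarrow> tv" where
  "tor (a1, a2, a3) (b1, b2, b3) =
     (a1 \<or> b1, a2 \<and> b2, (\<not> a1 \<and> b3) \<or> (a3 \<and> \<not> b1) \<or> (a3 \<and> b3))"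

fun timp :: "tv \<Rightarrow> tv \<Rightarrow> tv" where
  "timp (a1, a2, a3) (b1, b2, b3) =
     (a1 \<longrightarrow> b1, b2 \<and> (\<not> a2 \<or> a3),
      (\<not> a2 \<and> b3) \<or> (\<not> a2 \<and> a3 \<and> \<not> b1) \<or> (a3 \<and> b3) \<or> (\<not> a1 \<and> a3 \<and> \<not> b1))"

fun tneg :: "tv \<Rightarrow> tv" where
  "tneg (a1, a2, a3) = (a2, a1, a3)"

fun tcirc :: "tv \<Rightarrow> tv" where
  "tcirc (a1, a2, a3) = (\<not> (a1 \<and> a2), a3, a3 \<and> \<not> (a1 \<and> a2))"

definition designated :: "tv \<Rightarrow> bool" where
  "designated x = fst x"

primrec eval :: "(nat \<Rightarrow> tv) \<Rightarrow> fm \<Rightarrow> tv" where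
  "eval v (Atom p) = v p"
| "eval v (Neg a) = tneg (eval v a)"
| "eval v (Circ a) = tcirc (eval v a)"
| "eval v (And a b) = tand (eval v a) (eval v b)"
| "eval v (Or a b) = tor (eval v a) (eval v b)"
| "eval v (Imp a b) = timp (eval v a) (eval v b)"

definition LFI3_cons :: "fm set \<Rightarrow> fm \<Rightarrow> bool" where
  "LFI3_cons \<Gamma> a \<longleftrightarrow> (\<forall>v. (\<forall>p. v p \<in> BB) \<longrightarrow>
      (\<forall>g\<in>\<Gamma>. designated (eval v g)) \<longrightarrow> designated (eval v a))"

definition CPL_cons :: "fm set \<Rightarrow> fm \<Rightarrow> bool" where
  "CPL_cons \<Gamma> a \<longleftrightarrow> (\<forall>v. (\<forall>p. v p \<in> {TT, FF}) \<longrightarrow>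
      (\<forall>g\<in>\<Gamma>. eval v g = TT) \<longrightarrow> eval v a = TT)"

end

theory Submission
  imports Defs
begin

lemma classical_closed: "(\<forall>p. v p \<in> {TT, FF}) \<Longrightarrow> eval v a \<in> {TT, FF}"
  by (induction a) (auto simp: TT_def FF_def)

lemma eval_cong: "(\<forall>p\<in>vars a. v p = w p) \<Longrightarrow> eval v a = eval w a"
  by (induction a) auto

lemma circstar_classical_T: "x \<in> {TT, FF} \<Longrightarrow> eval v (circstar a) = TT"
  if "eval v a = x" for x
  using that by (auto simp: circstar_def TT_def FF_def)

lemma circstar_des: "x \<in> BB \<Longrightarrow> designated (eval v (circstar (Atom p))) \<Longrightarrow> v p \<in> {TT, FF}"
  by (cases "v p") (auto simp: circstar_def TT_def FF_def BB_def designated_def)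

theorem theorem21:
  fixes \<Gamma> :: "fm set" and \<alpha> :: fm
  shows "LFI3_cons ((\<lambda>p. circstar (Atom p)) ` Vars (\<Gamma> \<union> {\<alpha>}) \<union> \<Gamma>) \<alpha> \<longleftrightarrow> CPL_cons \<Gamma> \<alpha>"
proof
  assume L: "LFI3_cons ((\<lambda>p. circstar (Atom p)) ` Vars (\<Gamma> \<union> {\<alpha>}) \<union> \<Gamma>) \<alpha>"
  show "CPL_cons \<Gamma> \<alpha>"
    unfolding CPL_cons_def
  proof (intro allI impI)
    fix v assume cl: "\<forall>p. v p \<in> {TT, FF}" and G: "\<forall>g\<in>\<Gamma>. eval v g = TT"
    have "\<forall>p. v p \<in> BB"
    proof
      fix p have "v p = TT \<or> v p = FF" using cl by blast
      then show "v p \<in> BB" by (auto simp: BB_def TT_def FF_def)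
    qed
    moreover have "\<forall>g\<in>(\<lambda>p. circstar (Atom p)) ` Vars (\<Gamma> \<union> {\<alpha>}) \<union> \<Gamma>. designated (eval v g)"
    proof
      fix g assume "g \<in> (\<lambda>p. circstar (Atom p)) ` Vars (\<Gamma> \<union> {\<alpha>}) \<union> \<Gamma>"
      then show "designated (eval v g)"
      proof
        assume "g \<in> (\<lambda>p. circstar (Atom p)) ` Vars (\<Gamma> \<union> {\<alpha>})"
        then obtain p where "g = circstar (Atom p)" by auto
        moreover have "eval v (circstar (Atom p)) = TT"
          using circstar_classical_T[of v "Atom p" "v p"] cl by auto
        ultimately show ?thesis by (simp add: designated_def TT_def)
      next
        assume "g \<in> \<Gamma>" then show ?thesis using G by (simp add: designated_def TT_def)
      qed
    qed
    ultimately have "designated (eval v \<alpha>)" using L unfolding LFI3_cons_def by blast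
    moreover have "eval v \<alpha> \<in> {TT, FF}" using classical_closed cl by blast
    ultimately show "eval v \<alpha> = TT" by (auto simp: designated_def FF_def)
  qed
next
  assume C: "CPL_cons \<Gamma> \<alpha>"
  show "LFI3_cons ((\<lambda>p. circstar (Atom p)) ` Vars (\<Gamma> \<union> {\<alpha>}) \<union> \<Gamma>) \<alpha>"
    unfolding LFI3_cons_def
  proof (intro allI impI)
    fix v assume B: "\<forall>p. v p \<in> BB"
      and D: "\<forall>g\<in>(\<lambda>p. circstar (Atom p)) ` Vars (\<Gamma> \<union> {\<alpha>}) \<union> \<Gamma>. designated (eval v g)"
    define w where "w p = (if p \<in> Vars (\<Gamma> \<union> {\<alpha>}) then v p else TT)" for p
    have wc: "\<forall>p. w p \<in> {TT, FF}"
    proof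
      fix p show "w p \<in> {TT, FF}"
      proof (cases "p \<in> Vars (\<Gamma> \<union> {\<alpha>})")
        case True
        then have "designated (eval v (circstar (Atom p)))" using D by blast
        then show ?thesis using circstar_des[OF B[rule_format, of p]] True by (simp add: w_def)
      qed (simp add: w_def)
    qed
    have ew: "eval w g = eval v g" if "g \<in> \<Gamma> \<union> {\<alpha>}" for g
      by (rule eval_cong) (use that in \<open>auto simp: w_def Vars_def\<close>)
    have "\<forall>g\<in>\<Gamma>. eval w g = TT"
    proof
      fix g assume g: "g \<in> \<Gamma>"
      then have "designated (eval w g)" using D ew by auto
      moreover have "eval w g \<in> {TT, FF}" using classical_closed wc by blast
      ultimately show "eval w g = TT" by (auto simp: designated_def FF_def)
    qed
    then have "eval w \<alpha> = TT" using C wc unfolding CPL_cons_def by blast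
    then show "designated (eval v \<alpha>)" using ew by (auto simp: designated_def TT_def)
  qed
qed

end
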